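(* Let $(X_n)_{n\in\mathbb{N}}$ be a sequence of random matrices with $X_n\in M_n^{sa}$ having property $\mathcal{L}$. Then the sequence of probability measures $\mathbb{E} L_n^{\frac{1}{\sqrt{n}}X_n}$ is tight.
   Context: $M_n^{sa}$ denotes the space of $n\times n$ complex Hermitian matrices. For a random Hermitian $n\times n$ matrix $X$ with eigenvalues $\lambda_1\le\dots\le\lambda_n$, $L_n^X=\frac1n\sum_{i=1}^n\delta_{\lambda_i}$ and $\mathbb{E}L_n^X$ is the probability measure $A\mapsto\mathbb{E}(L_n^X(A))$. A sequence of random matrices $X_n\in M_n$ has property $\mathcal{L}$ if for every $\varepsilon>0$, \[ \lim_{M\to\infty}\limsup_{n\to\infty}\mathbb{P}\Big(\frac1{n^2}\sum_{i,j=1}^n|(X_n)_{ij}|^2\mathbf{1}_{\{|(X_n)_{ij}|>M\}}>\varepsilon\Big)=0. \] *)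

theory Defs
  imports "HOL-Probability.Probability" "Jordan_Normal_Form.Char_Poly"
begin

text \<open>An n x n complex matrix represented as a function of the indices (only i,j < n matter).\<close>

definition hermitian_fun :: "nat \<Rightarrow> (nat \<Rightarrow> nat \<Rightarrow> complex) \<Rightarrow> bool" where
  "hermitian_fun n A \<longleftrightarrow> (\<forall>i<n. \<forall>j<n. A i j = cnj (A j i))"

definition to_mat :: "nat \<Rightarrow> (nat \<Rightarrow> nat \<Rightarrow> complex) \<Rightarrow> complex mat" where
  "to_mat n A = mat n n (\<lambda>(i,j). A i j)"

definition eig_count :: "complex mat \<Rightarrow> real set \<Rightarrow> nat" where
  "eig_count A S = (\<Sum>x\<in>{x::real. x \<in> S \<and> poly (char_poly A) (complex_of_real x) = 0}.
       order (complex_of_real x) (char_poly A))"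

definition esd :: "nat \<Rightarrow> (nat \<Rightarrow> nat \<Rightarrow> complex) \<Rightarrow> real set \<Rightarrow> real" where
  "esd n A S = real (eig_count (to_mat n A) S) / real n"

definition property_L :: "'a measure \<Rightarrow> (nat \<Rightarrow> 'a \<Rightarrow> nat \<Rightarrow> nat \<Rightarrow> complex) \<Rightarrow> bool" where
  "property_L P X \<longleftrightarrow> (\<forall>\<epsilon>>0.
     ((\<lambda>M::real. limsup (\<lambda>n. ereal (measure P {\<omega>\<in>space P.
         (1 / real n ^ 2) * (\<Sum>i<n. \<Sum>j<n. (if cmod (X n \<omega> i j) > M then cmod (X n \<omega> i j) ^ 2 else 0))
           > \<epsilon>})))
      \<longlongrightarrow> 0) at_top)"

end

theory Submission
  imports Defs "Jordan_Normal_Form.Schur_Decomposition"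
begin


lemma order_prod_linear:
  "Polynomial.order (x::complex) (\<Prod>a\<leftarrow>as. [:- a, 1:]) = count_list as x"
proof (induction as)
  case Nil
  then show ?case by (simp add: order_0I)
next
  case (Cons a as)
  have nz: "[:- a, 1:] * (\<Prod>a\<leftarrow>as. [:- a, 1:]) \<noteq> 0"
    using prod_list_zero_iff[of "map (\<lambda>a. [:- a, 1:]) (a#as)"] by auto
  have "Polynomial.order x (\<Prod>a\<leftarrow>a#as. [:- a, 1:]) =
     Polynomial.order x [:- a, 1:] + Polynomial.order x (\<Prod>a\<leftarrow>as. [:- a, 1:])"
    by (simp only: list.map prod_list.Cons order_mult[OF nz])
  then show ?case using Cons by (simp add: order_linear')
qed

lemma count_list_sum: "count_list xs y = (\<Sum>i<length xs. if xs!i = y then 1 else 0)"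
proof (induction xs)
  case Nil then show ?case by simp
next
  case (Cons a xs)
  have "(\<Sum>i<length (a#xs). if (a#xs)!i = y then 1 else 0) =
    (if a = y then 1 else 0) + (\<Sum>i<length xs. if xs!i = y then 1 else (0::nat))"
    by (simp only: length_Cons sum.lessThan_Suc_shift) simp
  then show ?case using Cons by simp
qed

lemma hermitian_eig_real:
  assumes h: "hermitian_fun n A" and ev: "eigenvalue (to_mat n A) l"
  shows "Im l = 0"
proof -
  let ?B = "to_mat n A"
  obtain v where v: "eigenvector ?B v l" using ev unfolding eigenvalue_def by blast
  have dimB: "dim_row ?B = n" by (simp add: to_mat_def)
  have vc: "v \<in> carrier_vec n" and vnz: "v \<noteq> 0\<^sub>v n" and ev': "?B *\<^sub>v v = l \<cdot>\<^sub>v v"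
    using v unfolding eigenvector_def dimB by auto
  have row: "(\<Sum>j<n. A i j * v $ j) = l * v $ i" if "i < n" for i
  proof -
    have "(?B *\<^sub>v v) $ i = (l \<cdot>\<^sub>v v) $ i" using ev' by simp
    moreover have "(?B *\<^sub>v v) $ i = (\<Sum>j<n. A i j * v $ j)"
      using that vc by (simp add: to_mat_def scalar_prod_def atLeast0LessThan)
    moreover have "(l \<cdot>\<^sub>v v) $ i = l * v $ i" using that vc by simp
    ultimately show ?thesis by simp
  qed
  define s where "s = (\<Sum>i<n. cnj (v $ i) * (\<Sum>j<n. A i j * v $ j))"
  define r where "r = (\<Sum>i<n. cmod (v $ i) ^ 2)"
  have s1: "s = l * complex_of_real r"
  proof -
    have "s = (\<Sum>i<n. l * (cnj (v $ i) * v $ i))" unfolding s_def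
      by (rule sum.cong, simp_all add: row)
    also have "\<dots> = l * (\<Sum>i<n. complex_of_real (cmod (v $ i) ^ 2))"
      unfolding sum_distrib_left by (rule sum.cong) (simp_all add: complex_norm_square[symmetric] mult.commute)
    finally show ?thesis unfolding r_def by simp
  qed
  have s2: "cnj s = s"
  proof -
    have "cnj s = (\<Sum>i<n. \<Sum>j<n. v $ i * cnj (A i j) * cnj (v $ j))"
      unfolding s_def by (simp add: sum_distrib_left mult.assoc)
    also have "\<dots> = (\<Sum>i<n. \<Sum>j<n. v $ i * A j i * cnj (v $ j))"
      using h unfolding hermitian_fun_def
      by (intro sum.cong refl) (metis complex_cnj_cnj lessThan_iff)
    also have "\<dots> = (\<Sum>j<n. \<Sum>i<n. v $ i * A j i * cnj (v $ j))" by (rule sum.swap)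
    also have "\<dots> = s" unfolding s_def
      by (simp add: sum_distrib_left mult.assoc mult.commute mult.left_commute)
    finally show ?thesis .
  qed
  have rpos: "r > 0"
  proof -
    obtain i where i: "i < n" "v $ i \<noteq> 0" using vnz vc by (metis eq_vecI carrier_vecD index_zero_vec(1,2))
    have "cmod (v $ i) ^ 2 > 0" using i by simp
    moreover have "cmod (v $ i) ^ 2 \<le> r" unfolding r_def
      by (rule member_le_sum) (use i in auto)
    ultimately show ?thesis by linarith
  qed
  from s1 s2 have "cnj l * complex_of_real r = l * complex_of_real r" by simp
  hence "cnj l = l" using rpos by simp
  thus ?thesis by (metis Reals_cnj_iff complex_is_Real_iff)
qed

definition mtr :: "'b::comm_ring_1 mat \<Rightarrow> 'b" where
  "mtr M = (\<Sum>i<dim_row M. M $$ (i,i))"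

lemma mtr_mult_expand:
  assumes "A \<in> carrier_mat n m" "B \<in> carrier_mat m n"
  shows "mtr (A * B) = (\<Sum>i<n. \<Sum>k<m. A $$ (i,k) * B $$ (k,i))"
  using assms unfolding mtr_def
  by (intro sum.cong refl) (auto simp: scalar_prod_def atLeast0LessThan)

lemma mtr_comm:
  assumes "A \<in> carrier_mat n m" "B \<in> carrier_mat m n"
  shows "mtr (A * B) = mtr (B * A)"
proof -
  have "mtr (A * B) = (\<Sum>i<n. \<Sum>k<m. A $$ (i,k) * B $$ (k,i))" by (rule mtr_mult_expand[OF assms])
  also have "\<dots> = (\<Sum>k<m. \<Sum>i<n. B $$ (k,i) * A $$ (i,k))"
    by (subst sum.swap) (simp add: mult.commute)
  also have "\<dots> = mtr (B * A)" by (rule mtr_mult_expand[symmetric, OF assms(2,1)])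
  finally show ?thesis .
qed

lemma to_mat_carrier[simp]: "to_mat n A \<in> carrier_mat n n"
  by (simp add: to_mat_def)

lemma eig_count_bound:
  fixes A :: "nat \<Rightarrow> nat \<Rightarrow> complex"
  assumes h: "hermitian_fun n A" and K: "K > 0"
  shows "real (eig_count (to_mat n A) {x. K < \<bar>x\<bar>}) \<le> real n \<and>
         real (eig_count (to_mat n A) {x. K < \<bar>x\<bar>}) \<le> (\<Sum>i<n. \<Sum>j<n. cmod (A i j) ^ 2) / K^2"
proof -
  define B where "B = to_mat n A"
  have Bc: "B \<in> carrier_mat n n" unfolding B_def by simp
  obtain as where cp: "char_poly B = (\<Prod>a\<leftarrow>as. [:- a, 1:])" and len: "length as = n"
    using char_poly_factorized[OF Bc] by blast
  obtain T P Q where sd: "schur_decomposition B as = (T,P,Q)" by (cases "schur_decomposition B as") auto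
  from schur_decomposition[OF Bc cp sd]
  have sim: "similar_mat_wit B T P Q" and ut: "upper_triangular T" and dg: "diag_mat T = as" by auto
  have Tc: "T \<in> carrier_mat n n" and Pc: "P \<in> carrier_mat n n" and Qc: "Q \<in> carrier_mat n n"
    and QP: "Q * P = 1\<^sub>m n" and BPTQ: "B = P * T * Q"
    using sim Bc unfolding similar_mat_wit_def Let_def by auto
  have real_as: "Im (as ! i) = 0" if "i < n" for i
  proof -
    have "as ! i \<in> set as" using that len by simp
    hence "poly (char_poly B) (as ! i) = 0" unfolding cp
      by (auto simp: poly_prod_list_zero_iff)
    hence "eigenvalue B (as ! i)" using eigenvalue_root_char_poly[OF Bc] by simp
    thus ?thesis using hermitian_eig_real[OF h] unfolding B_def by blast
  qed
  define R where "R = {x. K < \<bar>x\<bar> \<and> poly (char_poly B) (complex_of_real x) = 0}"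
  have Rsub: "R \<subseteq> Re ` set as"
  proof
    fix x assume "x \<in> R"
    hence "poly (\<Prod>a\<leftarrow>as. [:- a, 1:]) (complex_of_real x) = 0" unfolding R_def cp by simp
    hence "complex_of_real x \<in> set as" by (auto simp: poly_prod_list_zero_iff)
    thus "x \<in> Re ` set as" by (metis Re_complex_of_real image_eqI)
  qed
  have finR: "finite R" using Rsub finite_surj by blast
  define c where "c i = (\<Sum>x\<in>R. if as ! i = complex_of_real x then 1 else (0::nat))" for i
  have ec: "eig_count B {x. K < \<bar>x\<bar>} = (\<Sum>i<n. c i)"
  proof -
    have "eig_count B {x. K < \<bar>x\<bar>} = (\<Sum>x\<in>R. Polynomial.order (complex_of_real x) (char_poly B))"
      unfolding eig_count_def R_def by simp
    also have "\<dots> = (\<Sum>x\<in>R. \<Sum>i<n. if as ! i = complex_of_real x then 1 else 0)"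
      unfolding cp order_prod_linear count_list_sum len by simp
    also have "\<dots> = (\<Sum>i<n. c i)" unfolding c_def by (rule sum.swap)
    finally show ?thesis .
  qed
  have cb: "real (c i) \<le> 1 \<and> real (c i) \<le> (Re (as ! i))^2 / K^2" if i: "i < n" for i
  proof -
    have ci: "c i = card {x\<in>R. as ! i = complex_of_real x}"
      unfolding c_def using finR by (simp add: sum.inter_filter[symmetric])
    show ?thesis
    proof (cases "{x\<in>R. as ! i = complex_of_real x} = {}")
      case True
      then have "c i = 0" unfolding ci by (simp only: card.empty)
      then show ?thesis by simp
    next
      case False
      then obtain x0 where x0: "x0 \<in> R" "as ! i = complex_of_real x0" by blast
      have "{x\<in>R. as ! i = complex_of_real x} = {x0}" using x0 by auto
      hence c1: "c i = 1" unfolding ci by simp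
      have "K < \<bar>x0\<bar>" using x0 unfolding R_def by simp
      hence "K^2 < \<bar>x0\<bar>^2" using K by (intro power_strict_mono) auto
      hence "1 \<le> x0^2 / K^2" using K by simp
      moreover have "Re (as ! i) = x0" using x0 by simp
      ultimately show ?thesis using c1 by simp
    qed
  qed
  have sumsq: "(\<Sum>i<n. (Re (as ! i))^2) = (\<Sum>i<n. \<Sum>j<n. cmod (A i j) ^ 2)"
  proof -
    have "complex_of_real (\<Sum>i<n. (Re (as ! i))^2) = (\<Sum>i<n. (as ! i)^2)"
      using real_as by (simp add: power2_eq_square complex_eq_iff)
    also have "\<dots> = (\<Sum>i<n. T $$ (i,i) * T $$ (i,i))"
      using dg Tc by (auto simp: diag_mat_def power2_eq_square intro!: sum.cong)
    also have "\<dots> = mtr (T * T)"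
    proof -
      have "mtr (T * T) = (\<Sum>i<n. \<Sum>k<n. T $$ (i,k) * T $$ (k,i))" by (rule mtr_mult_expand[OF Tc Tc])
      also have "\<dots> = (\<Sum>i<n. \<Sum>k<n. if k = i then T $$ (i,i) * T $$ (i,i) else 0)"
      proof (intro sum.cong refl)
        fix i k assume "i \<in> {..<n}" "k \<in> {..<n}"
        then show "T $$ (i,k) * T $$ (k,i) = (if k = i then T $$ (i,i) * T $$ (i,i) else 0)"
          using ut Tc unfolding upper_triangular_def
          by (cases "k < i"; cases "i < k"; auto)
      qed
      also have "\<dots> = (\<Sum>i<n. T $$ (i,i) * T $$ (i,i))" by simp
      finally show ?thesis by simp
    qed
    also have "\<dots> = mtr (B * B)"
    proof -
      have QPX: "Q * (P * X) = X" if "X \<in> carrier_mat n n" for X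
      proof -
        have "Q * (P * X) = (Q * P) * X" using Qc Pc that by (simp add: assoc_mult_mat)
        thus ?thesis using QP that by simp
      qed
      have TQc: "T * Q \<in> carrier_mat n n" and PTQc: "P * (T * Q) \<in> carrier_mat n n" using Pc Tc Qc by auto
      have "B * B = (P * (T * Q)) * (P * (T * Q))" unfolding BPTQ using Pc Tc Qc by simp
      also have "\<dots> = P * ((T * Q) * (P * (T * Q)))" by (rule assoc_mult_mat[OF Pc TQc PTQc])
      also have "(T * Q) * (P * (T * Q)) = T * (Q * (P * (T * Q)))" by (rule assoc_mult_mat[OF Tc Qc PTQc])
      finally have "B * B = P * (T * (Q * (P * (T * Q))))" .
      also have "\<dots> = P * (T * (T * Q))" using QPX[of "T * Q"] Tc Qc by simp
      finally have BB: "B * B = P * (T * (T * Q))" .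
      have "mtr (B * B) = mtr ((T * (T * Q)) * P)" unfolding BB
        by (rule mtr_comm[OF Pc]) (use Tc Qc in simp)
      also have "(T * (T * Q)) * P = T * T"
      proof -
        have "(T * (T * Q)) * P = T * ((T * Q) * P)" by (rule assoc_mult_mat[OF Tc TQc Pc])
        also have "(T * Q) * P = T * (Q * P)" by (rule assoc_mult_mat[OF Tc Qc Pc])
        also have "T * (Q * P) = T" unfolding QP by (rule right_mult_one_mat[OF Tc])
        finally show ?thesis .
      qed
      finally show ?thesis by (rule sym)
    qed
    also have "\<dots> = (\<Sum>i<n. \<Sum>k<n. A i k * A k i)"
      using mtr_mult_expand[OF Bc Bc] unfolding B_def by (simp add: to_mat_def)
    also have "\<dots> = (\<Sum>i<n. \<Sum>k<n. complex_of_real (cmod (A i k) ^ 2))"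
    proof (intro sum.cong refl)
      fix i k assume "i \<in> {..<n}" "k \<in> {..<n}"
      then have "A k i = cnj (A i k)" using h unfolding hermitian_fun_def lessThan_iff by blast
      then show "A i k * A k i = complex_of_real (cmod (A i k) ^ 2)"
        by (simp only: complex_norm_square)
    qed
    also have "\<dots> = complex_of_real (\<Sum>i<n. \<Sum>j<n. cmod (A i j) ^ 2)" by simp
    finally show ?thesis by (simp only: of_real_eq_iff)
  qed
  have "real (eig_count B {x. K < \<bar>x\<bar>}) = (\<Sum>i<n. real (c i))" unfolding ec by simp
  moreover have "(\<Sum>i<n. real (c i)) \<le> (\<Sum>i<n. 1)" by (intro sum_mono) (use cb in auto)
  moreover have "(\<Sum>i<n. real (c i)) \<le> (\<Sum>i<n. (Re (as ! i))^2 / K^2)" by (intro sum_mono) (use cb in auto)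
  moreover have "(\<Sum>i<n. (Re (as ! i))^2 / K^2) = (\<Sum>i<n. \<Sum>j<n. cmod (A i j) ^ 2) / K^2"
    unfolding sumsq[symmetric] by (simp add: sum_divide_distrib)
  ultimately show ?thesis unfolding B_def by simp
qed



lemma esd_bounds:
  fixes Y :: "nat \<Rightarrow> nat \<Rightarrow> complex"
  assumes h: "hermitian_fun n Y" and n: "n \<ge> 1" and K: "K > 0"
  shows "esd n (\<lambda>i j. Y i j / complex_of_real (sqrt (real n))) {x. K < \<bar>x\<bar>} \<le> 1 \<and>
         esd n (\<lambda>i j. Y i j / complex_of_real (sqrt (real n))) {x. K < \<bar>x\<bar>}
           \<le> (\<Sum>i<n. \<Sum>j<n. cmod (Y i j) ^ 2) / (real n ^ 2 * K ^ 2)"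
proof -
  define Z where "Z = (\<lambda>i j. Y i j / complex_of_real (sqrt (real n)))"
  have hz: "hermitian_fun n Z"
    unfolding hermitian_fun_def
  proof (intro allI impI)
    fix i j assume "i < n" "j < n"
    then have "Y i j = cnj (Y j i)" using h unfolding hermitian_fun_def by blast
    then show "Z i j = cnj (Z j i)" unfolding Z_def by simp
  qed
  have nz: "real n > 0" using n by simp
  have sq: "cmod (Z i j) ^ 2 = cmod (Y i j) ^ 2 / real n" for i j
    unfolding Z_def using nz by (simp add: norm_divide power_divide)
  have "(\<Sum>i<n. \<Sum>j<n. cmod (Z i j) ^ 2) = (\<Sum>i<n. \<Sum>j<n. cmod (Y i j) ^ 2) / real n"
    unfolding sq by (simp add: sum_divide_distrib)
  with eig_count_bound[OF hz K]
  have b1: "real (eig_count (to_mat n Z) {x. K < \<bar>x\<bar>}) \<le> real n"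
    and b2: "real (eig_count (to_mat n Z) {x. K < \<bar>x\<bar>}) \<le> (\<Sum>i<n. \<Sum>j<n. cmod (Y i j) ^ 2) / real n / K^2"
    by auto
  have "esd n Z {x. K < \<bar>x\<bar>} \<le> 1" using b1 nz unfolding esd_def by simp
  moreover have "esd n Z {x. K < \<bar>x\<bar>} \<le> (\<Sum>i<n. \<Sum>j<n. cmod (Y i j) ^ 2) / (real n ^ 2 * K ^ 2)"
  proof -
    have "esd n Z {x. K < \<bar>x\<bar>} = real (eig_count (to_mat n Z) {x. K < \<bar>x\<bar>}) / real n"
      unfolding esd_def ..
    also have "\<dots> \<le> (\<Sum>i<n. \<Sum>j<n. cmod (Y i j) ^ 2) / real n / K^2 / real n"
      by (rule divide_right_mono[OF b2]) (use nz in simp)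
    also have "\<dots> = (\<Sum>i<n. \<Sum>j<n. cmod (Y i j) ^ 2) / (real n ^ 2 * K ^ 2)"
      by (simp add: power2_eq_square field_simps)
    finally show ?thesis .
  qed
  ultimately show ?thesis unfolding Z_def by simp
qed

lemma integral_bound:
  fixes P :: "'a measure" and g :: "'a \<Rightarrow> real" and f :: "'a \<Rightarrow> real"
  assumes ps: "prob_space P" and g: "g \<in> borel_measurable P" and d: "d \<ge> 0"
    and fb: "\<And>\<omega>. \<omega> \<in> space P \<Longrightarrow> f \<omega> \<le> (if c < g \<omega> then 1 else 0) + d"
  shows "integral\<^sup>L P f \<le> measure P {\<omega>\<in>space P. c < g \<omega>} + d"
proof (cases "integrable P f")
  case True
  define G where "G = {\<omega>\<in>space P. c < g \<omega>}"
  have Gs: "G \<in> sets P" unfolding G_def using g borel_measurable_iff_greater by blast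
  interpret prob_space P by (rule ps)
  have hi: "integrable P (\<lambda>\<omega>. indicator G \<omega> + d)"
    using Gs by (intro Bochner_Integration.integrable_add) (auto simp: emeasure_eq_measure)
  have "integral\<^sup>L P f \<le> integral\<^sup>L P (\<lambda>\<omega>. indicator G \<omega> + d)"
  proof (rule integral_mono[OF True hi])
    fix \<omega> assume w: "\<omega> \<in> space P"
    show "f \<omega> \<le> indicator G \<omega> + d" using fb[OF w] w by (cases "c < g \<omega>") (simp_all add: G_def indicator_def)
  qed
  also have "\<dots> = measure P G + d"
    using Gs prob_space.prob_space[OF ps] by (subst Bochner_Integration.integral_add) (auto simp: emeasure_eq_measure)
  finally show ?thesis unfolding G_def .
next
  case False
  then have "integral\<^sup>L P f = 0" by (rule not_integrable_integral_eq)
  then show ?thesis using d by simp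
qed



theorem proposition2p7:
  fixes P :: "'a measure" and X :: "nat \<Rightarrow> 'a \<Rightarrow> nat \<Rightarrow> nat \<Rightarrow> complex"
  assumes "prob_space P"
    and "\<And>n i j. i < n \<Longrightarrow> j < n \<Longrightarrow> (\<lambda>\<omega>. X n \<omega> i j) \<in> borel_measurable P"
    and "\<And>n \<omega>. \<omega> \<in> space P \<Longrightarrow> hermitian_fun n (X n \<omega>)"
    and "property_L P X"
  shows "\<forall>\<epsilon>>0. \<exists>K::real. \<forall>n\<ge>1.
    (\<integral>\<omega>. esd n (\<lambda>i j. X n \<omega> i j / complex_of_real (sqrt (real n))) {x. \<bar>x\<bar> > K} \<partial>P) < \<epsilon>"
proof (intro allI impI)
  fix \<epsilon> :: real assume e: "\<epsilon> > 0"
  note ps = assms(1) and meas = assms(2) and herm = assms(3)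
  interpret prob_space P by (rule ps)
  define E where "E n K \<omega> = esd n (\<lambda>i j. X n \<omega> i j / complex_of_real (sqrt (real n))) {x. K < \<bar>x\<bar>}"
    for n K \<omega>
  define F where "F n \<omega> = (\<Sum>i<n. \<Sum>j<n. cmod (X n \<omega> i j) ^ 2)" for n \<omega>
  define T where "T M n \<omega> = (1 / real n ^ 2) * (\<Sum>i<n. \<Sum>j<n. (if cmod (X n \<omega> i j) > M then cmod (X n \<omega> i j) ^ 2 else 0))"
    for M n \<omega>
  have Fm: "F n \<in> borel_measurable P" for n
  proof -
    have "(\<lambda>\<omega>. cmod (X n \<omega> i j) ^ 2) \<in> borel_measurable P"
      if "i < n" "j < n" for i j
    proof -
      have "(\<lambda>\<omega>. X n \<omega> i j) \<in> borel_measurable P" using meas that by blast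
      then show ?thesis by measurable
    qed
    then show ?thesis unfolding F_def
      by (intro borel_measurable_sum) auto
  qed
  have Tm: "T M n \<in> borel_measurable P" for M n
  proof -
    have "(\<lambda>\<omega>. if cmod (X n \<omega> i j) > M then cmod (X n \<omega> i j) ^ 2 else 0) \<in> borel_measurable P"
      if "i < n" "j < n" for i j
    proof -
      have "(\<lambda>\<omega>. X n \<omega> i j) \<in> borel_measurable P" using meas that by blast
      then show ?thesis by measurable
    qed
    then show ?thesis unfolding T_def
      by (intro borel_measurable_times borel_measurable_const borel_measurable_sum) auto
  qed
  have Eb: "E n K \<omega> \<le> 1 \<and> E n K \<omega> \<le> F n \<omega> / (real n ^ 2 * K ^ 2)"
    if "\<omega> \<in> space P" "n \<ge> 1" "K > 0" for n K \<omega>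
    unfolding E_def F_def using esd_bounds[OF herm[OF that(1)] that(2,3)] by simp
  have FT: "F n \<omega> / real n ^ 2 \<le> M ^ 2 + T M n \<omega>" if "n \<ge> 1" "M \<ge> 0" for n M \<omega>
  proof -
    have "F n \<omega> \<le> (\<Sum>i<n. \<Sum>j<n. M ^ 2 + (if cmod (X n \<omega> i j) > M then cmod (X n \<omega> i j) ^ 2 else 0))"
      unfolding F_def
    proof (intro sum_mono)
      fix i j
      show "cmod (X n \<omega> i j) ^ 2 \<le> M ^ 2 + (if cmod (X n \<omega> i j) > M then cmod (X n \<omega> i j) ^ 2 else 0)"
      proof (cases "cmod (X n \<omega> i j) > M")
        case False
        then have "cmod (X n \<omega> i j) ^ 2 \<le> M ^ 2" by (intro power_mono) auto
        then show ?thesis using False by simp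
      qed (simp add: that)
    qed
    also have "\<dots> = real n ^ 2 * M ^ 2 + (\<Sum>i<n. \<Sum>j<n. (if cmod (X n \<omega> i j) > M then cmod (X n \<omega> i j) ^ 2 else 0))"
      by (simp add: sum.distrib power2_eq_square)
    finally show ?thesis using that unfolding T_def by (simp add: field_simps)
  qed
  have "((\<lambda>M::real. limsup (\<lambda>n. ereal (measure P {\<omega>\<in>space P. 1 < T M n \<omega>}))) \<longlongrightarrow> 0) at_top"
    using assms(4) unfolding property_L_def T_def by (auto dest: spec[of _ 1])
  then have "eventually (\<lambda>M. limsup (\<lambda>n. ereal (measure P {\<omega>\<in>space P. 1 < T M n \<omega>})) < ereal (\<epsilon>/3)) at_top"
    using e by (intro order_tendstoD(2)) (auto simp: zero_ereal_def)
  then obtain M0 where M0: "\<And>M. M \<ge> M0 \<Longrightarrow> limsup (\<lambda>n. ereal (measure P {\<omega>\<in>space P. 1 < T M n \<omega>})) < ereal (\<epsilon>/3)"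
    by (auto simp: eventually_at_top_linorder)
  define M where "M = max M0 0"
  have M: "M \<ge> 0" "M \<ge> M0" unfolding M_def by auto
  have "eventually (\<lambda>n. ereal (measure P {\<omega>\<in>space P. 1 < T M n \<omega>}) < ereal (\<epsilon>/3)) sequentially"
    by (rule Limsup_lessD[OF M0[OF M(2)]])
  then obtain N where N: "\<And>n. n \<ge> N \<Longrightarrow> measure P {\<omega>\<in>space P. 1 < T M n \<omega>} < \<epsilon>/3"
    by (auto simp: eventually_sequentially)
  define K1 where "K1 = 3 * (M^2 + 1) / \<epsilon> + 1"
  have K1: "K1 \<ge> 1" unfolding K1_def using e by simp
  have big: "\<forall>K\<ge>K1. integral\<^sup>L P (E n K) < \<epsilon>" if n: "n \<ge> N" "n \<ge> 1" for n
  proof (intro allI impI)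
    fix K assume K: "K \<ge> K1"
    have Kp: "K > 0" using K K1 by simp
    have dlt: "(M^2 + 1) / K^2 < \<epsilon>/3"
    proof -
      have "K \<le> K^2" using K K1 by (simp add: power2_eq_square)
      then have "\<epsilon> * K \<le> \<epsilon> * K^2" using e by (intro mult_left_mono) auto
      moreover have "3 * (M^2 + 1) / \<epsilon> < K" using K unfolding K1_def by simp
      then have "3 * (M^2 + 1) < \<epsilon> * K" using e by (simp add: field_simps)
      ultimately have "3 * (M^2 + 1) < \<epsilon> * K^2" by linarith
      then show ?thesis using Kp e by (simp add: field_simps)
    qed
    have "integral\<^sup>L P (E n K) \<le> measure P {\<omega>\<in>space P. 1 < T M n \<omega>} + (M^2 + 1) / K^2"
    proof (rule integral_bound[OF ps Tm])
      show "0 \<le> (M^2 + 1) / K^2" by simp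
      fix \<omega> assume w: "\<omega> \<in> space P"
      from Eb[OF w n(2) Kp] have e1: "E n K \<omega> \<le> 1" and e2: "E n K \<omega> \<le> F n \<omega> / (real n ^ 2 * K ^ 2)" by auto
      show "E n K \<omega> \<le> (if 1 < T M n \<omega> then 1 else 0) + (M^2 + 1) / K^2"
      proof (cases "1 < T M n \<omega>")
        case True
        have "0 \<le> (M^2 + 1) / K^2" by simp
        moreover have "(if 1 < T M n \<omega> then 1 else 0) = (1::real)" using True by simp
        ultimately show ?thesis using e1 by linarith
      next
        case False
        have "F n \<omega> / (real n ^ 2 * K ^ 2) = (F n \<omega> / real n ^ 2) / K^2" by simp
        also have "\<dots> \<le> (M^2 + T M n \<omega>) / K^2" by (rule divide_right_mono[OF FT[OF n(2) M(1)]]) simp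
        also have "\<dots> \<le> (M^2 + 1) / K^2" using False by (simp add: divide_right_mono)
        finally show ?thesis using e2 False by simp
      qed
    qed
    also have "\<dots> < \<epsilon>/3 + \<epsilon>/3" using N[OF n(1)] dlt by simp
    finally show "integral\<^sup>L P (E n K) < \<epsilon>" using e by simp
  qed
  have small: "\<exists>k. \<forall>K\<ge>k. integral\<^sup>L P (E n K) < \<epsilon>" if n: "n \<ge> 1" for n
  proof -
    define A where "A i = {\<omega>\<in>space P. real i < F n \<omega>}" for i :: nat
    have As: "range A \<subseteq> sets P" unfolding A_def using Fm[of n] by auto
    have Adec: "antimono_on UNIV A" unfolding A_def monotone_on_def by auto
    have Aint: "\<Inter> (range A) = {}"
    proof -
      have "\<omega> \<notin> A (nat \<lceil>F n \<omega>\<rceil>)" for \<omega> unfolding A_def by (auto simp: not_less) linarith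
      then show ?thesis by blast
    qed
    have "(\<lambda>i. measure P (A i)) \<longlonglongrightarrow> 0"
      using finite_Lim_measure_decseq[OF As Adec] unfolding Aint by simp
    then have "eventually (\<lambda>i. measure P (A i) < \<epsilon>/2) sequentially"
      using e by (intro order_tendstoD(2)) auto
    then obtain i where i: "measure P (A i) < \<epsilon>/2" by (auto simp: eventually_sequentially)
    define k where "k = 2 * real i / \<epsilon> + 1"
    show ?thesis
    proof (intro exI allI impI)
      fix K assume K: "k \<le> K"
      have k1: "k \<ge> 1" unfolding k_def using e by simp
      have Kp: "K > 0" using K k1 by simp
      have dlt: "real i / K^2 < \<epsilon>/2"
      proof -
        have "K \<le> K^2" using K k1 by (simp add: power2_eq_square)
        then have "\<epsilon> * K \<le> \<epsilon> * K^2" using e by (intro mult_left_mono) auto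
        moreover have "2 * real i / \<epsilon> < K" using K unfolding k_def by simp
        then have "2 * real i < \<epsilon> * K" using e by (simp add: field_simps)
        ultimately have "2 * real i < \<epsilon> * K^2" by linarith
        then show ?thesis using Kp e by (simp add: field_simps)
      qed
      have "integral\<^sup>L P (E n K) \<le> measure P {\<omega>\<in>space P. real i < F n \<omega>} + real i / K^2"
      proof (rule integral_bound[OF ps Fm])
        show "0 \<le> real i / K^2" by simp
        fix \<omega> assume w: "\<omega> \<in> space P"
        from Eb[OF w n Kp] have e1: "E n K \<omega> \<le> 1" and e2: "E n K \<omega> \<le> F n \<omega> / (real n ^ 2 * K ^ 2)" by auto
        show "E n K \<omega> \<le> (if real i < F n \<omega> then 1 else 0) + real i / K^2"
        proof (cases "real i < F n \<omega>")
          case True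
          have "0 \<le> real i / K^2" by simp
          moreover have "(if real i < F n \<omega> then 1 else 0) = (1::real)" using True by simp
        ultimately show ?thesis using e1 by linarith
        next
          case False
          have n2: "real n ^ 2 \<ge> 1" using n by simp
          have F0: "F n \<omega> \<ge> 0" unfolding F_def by (intro sum_nonneg) auto
          have "F n \<omega> / (real n ^ 2 * K ^ 2) \<le> F n \<omega> / K^2"
            using n2 F0 Kp by (simp add: frac_le)
          also have "\<dots> \<le> real i / K^2" using False by (simp add: divide_right_mono)
          finally show ?thesis using e2 False by simp
        qed
      qed
      also have "\<dots> < \<epsilon>/2 + \<epsilon>/2" using i dlt unfolding A_def by linarith
      finally show "integral\<^sup>L P (E n K) < \<epsilon>" by simp
    qed
  qed
  have "\<forall>n\<in>{1..<N}. \<exists>k. \<forall>K\<ge>k. integral\<^sup>L P (E n K) < \<epsilon>" using small by auto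
  then obtain kf where kf: "\<And>n K. n \<in> {1..<N} \<Longrightarrow> K \<ge> kf n \<Longrightarrow> integral\<^sup>L P (E n K) < \<epsilon>"
    by metis
  define K where "K = K1 + (\<Sum>n\<in>{1..<N}. \<bar>kf n\<bar>)"
  show "\<exists>K::real. \<forall>n\<ge>1.
    (\<integral>\<omega>. esd n (\<lambda>i j. X n \<omega> i j / complex_of_real (sqrt (real n))) {x. \<bar>x\<bar> > K} \<partial>P) < \<epsilon>"
  proof (intro exI allI impI)
    fix n :: nat assume n: "n \<ge> 1"
    have S0: "(\<Sum>n\<in>{1..<N}. \<bar>kf n\<bar>) \<ge> 0" by (intro sum_nonneg) auto
    have "integral\<^sup>L P (E n K) < \<epsilon>"
    proof (cases "n \<ge> N")
      case True
      then show ?thesis using big[OF True n] S0 unfolding K_def by simp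
    next
      case False
      then have nin: "n \<in> {1..<N}" using n by simp
      have "kf n \<le> \<bar>kf n\<bar>" by simp
      also have "\<bar>kf n\<bar> \<le> (\<Sum>n\<in>{1..<N}. \<bar>kf n\<bar>)"
        by (rule member_le_sum[OF nin]) auto
      finally have "kf n \<le> K" unfolding K_def using K1 by simp
      then show ?thesis by (rule kf[OF nin])
    qed
    then show "(\<integral>\<omega>. esd n (\<lambda>i j. X n \<omega> i j / complex_of_real (sqrt (real n))) {x. \<bar>x\<bar> > K} \<partial>P) < \<epsilon>"
      unfolding E_def by simp
  qed
qed

end
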